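(* In the work extraction game described in the context, fix an initial state $\rho$ (energies $E_1,\dots,E_d$, occupation probabilities $\lambda_1,\dots,\lambda_d$), a final state $\sigma$ (energies $F_1,\dots,F_d$, occupation probabilities $\nu_1,\dots,\nu_d$), a number $\varepsilon\in[0,1)$ and a threshold $W\in\mathbb{R}$. Suppose a strategy $\mathcal S$ satisfies the following. It starts from the energies $E$ with the initial level distributed according to $\lambda$. It ends with the energies $F$. It succeeds, meaning that the total extracted work satisfies $W_{\rm tot}\ge W$, with probability at least $1-\varepsilon$. Conditioned on success, the final occupied level is distributed according to $\nu$. Then $$W\le W^\varepsilon(\rho\to\sigma)=kT\ln M\!\left(\tfrac{G^T(\rho)}{1-\varepsilon}\,\Big\|\,G^T(\sigma)\right).$$
   Context: Conventions. The constants $k>0$ (Boltzmann's constant) and $T>0$ (temperature) are fixed. A state is a finite-level system with energies $E_1,\dots,E_d\in\mathbb{R}\cup\{+\infty\}$, not all $+\infty$, together with a diagonal density matrix $\rho=\sum_i\lambda_i|e_i\rangle\langle e_i|$. Equivalently, it is a probability vector $(\lambda_i)$ over the levels, and we require $\lambda_i=0$ whenever $E_i=+\infty$. Gibbs rescaling. $G^T(\rho)$ is the function on $[0,\infty)$ built as follows. Each level $i$ with $E_i<\infty$ is represented by a block: an interval of length $e^{-E_i/kT}$ on which the function takes the constant value $\lambda_i e^{E_i/kT}$, so the block has area $\lambda_i$. The blocks are placed consecutively starting at $0$, in order of nonincreasing height. The function is $0$ beyond $Z=\sum_{i:E_i<\infty}e^{-E_i/kT}$. Thus $G^T(\rho)$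 is a nonincreasing probability density supported in $[0,Z]$. Relative mixedness. For nonincreasing integrable functions $f,g\ge 0$ on $[0,\infty)$, $$M(f\|g):=\max\Big\{m>0:\ \int_0^l f(x)\,dx\ge\int_0^{lm}g(x)\,dx\ \text{for all } l\ge 0\Big\}.$$ For $\varepsilon\in[0,1)$ define $$W^\varepsilon(\rho\to\sigma):=kT\ln M\big(G^T(\rho)/(1-\varepsilon)\,\big\|\,G^T(\sigma)\big).$$ Work extraction game. - A working medium has levels $1,\dots,d$. At each time it has an energy assignment $E\in(\mathbb{R}\cup\{+\infty\})^d$ and occupies exactly one (random) level. - For an assignment $E$, the Gibbs vector is $\gamma_E(i)=e^{-E_i/kT}/\sum_j e^{-E_j/kT}$, which is $0$ for levels at $+\infty$. - A strategy is a finite sequence of elementary steps, fixed in advance and independent of the random outcomes. Each step is one of two kinds. - (i) Thermalisation. Choose a $d\times d$ column-stochastic matrix $B$ with $B\gamma_E=\gamma_E$ for the current energies $E$. If the current level is $j$, the new level is $i$ with probability $B_{ij}$. Energies are unchanged and no work is exchanged. - (ii) Energy change. Choose a set $S$ of levels and new values for the energies of the levels in $S$; the other energies are unchanged and the occupied level is unchanged. If the occupied level $i$ lies in $S$, the work reservoir receives extracted work $E_i^{\rm old}-E_i^{\rm new}$; otherwise it receives $0$. (The paper changes all levels in $S$ by a common amount; arbitrary changes are compositions of such steps.) - The total extracted work $W_{\rm tot}$ is the sum over steps. By convention, a realisation in which some step yields work $-\infty$ (an occupied level raised to $+\infty$) has $W_{\rm tot}=-\infty$. - A run is successful for threshold $W$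 if $W_{\rm tot}\ge W$. *)

theory Defs
  imports "HOL-Analysis.Analysis" "HOL-Library.Extended_Real"
begin

(* Levels are 0..<d. Energies take values in ereal; the value -\<infinity> is
   excluded by explicit hypotheses, +\<infinity> is allowed.
   Throughout, kT denotes the product of Boltzmann's constant and the temperature. *)

definition bw :: "real \<Rightarrow> ereal \<Rightarrow> real" where
  "bw kT e = (if e = \<infinity> then 0 else exp (- real_of_ereal e / kT))"

definition gibbs_vec :: "real \<Rightarrow> nat \<Rightarrow> (nat \<Rightarrow> ereal) \<Rightarrow> nat \<Rightarrow> real" where
  "gibbs_vec kT d E i = bw kT (E i) / (\<Sum>j<d. bw kT (E j))"

definition is_state :: "nat \<Rightarrow> (nat \<Rightarrow> ereal) \<Rightarrow> (nat \<Rightarrow> real) \<Rightarrow> bool" where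
  "is_state d E lam \<longleftrightarrow>
     (\<forall>i<d. E i \<noteq> -\<infinity>) \<and> (\<exists>i<d. E i \<noteq> \<infinity>) \<and>
     (\<forall>i<d. 0 \<le> lam i) \<and> (\<Sum>i<d. lam i) = 1 \<and>
     (\<forall>i<d. E i = \<infinity> \<longrightarrow> lam i = 0)"

definition blk_height :: "real \<Rightarrow> (nat \<Rightarrow> ereal) \<Rightarrow> (nat \<Rightarrow> real) \<Rightarrow> nat \<Rightarrow> real" where
  "blk_height kT E lam i = lam i * exp (real_of_ereal (E i) / kT)"

definition blk_order :: "real \<Rightarrow> nat \<Rightarrow> (nat \<Rightarrow> ereal) \<Rightarrow> (nat \<Rightarrow> real) \<Rightarrow> nat list" where
  "blk_order kT d E lam = (SOME xs. distinct xs \<and> set xs = {i. i < d \<and> E i \<noteq> \<infinity>} \<and>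
        sorted_wrt (\<lambda>i j. blk_height kT E lam j \<le> blk_height kT E lam i) xs)"

definition blk_start :: "real \<Rightarrow> nat \<Rightarrow> (nat \<Rightarrow> ereal) \<Rightarrow> (nat \<Rightarrow> real) \<Rightarrow> nat \<Rightarrow> real" where
  "blk_start kT d E lam k = (\<Sum>m<k. bw kT (E (blk_order kT d E lam ! m)))"

definition gibbs_resc :: "real \<Rightarrow> nat \<Rightarrow> (nat \<Rightarrow> ereal) \<Rightarrow> (nat \<Rightarrow> real) \<Rightarrow> real \<Rightarrow> real" where
  "gibbs_resc kT d E lam x =
     (\<Sum>k<length (blk_order kT d E lam).
        if blk_start kT d E lam k \<le> x \<and> x < blk_start kT d E lam (Suc k)
        then blk_height kT E lam (blk_order kT d E lam ! k) else 0)"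

definition relmix :: "(real \<Rightarrow> real) \<Rightarrow> (real \<Rightarrow> real) \<Rightarrow> real" where
  "relmix f g = (GREATEST m. m > 0 \<and>
      (\<forall>l\<ge>0. integral {0..l} f \<ge> integral {0..l * m} g))"

definition W_eps :: "real \<Rightarrow> nat \<Rightarrow> (nat \<Rightarrow> ereal) \<Rightarrow> (nat \<Rightarrow> real) \<Rightarrow>
                     (nat \<Rightarrow> ereal) \<Rightarrow> (nat \<Rightarrow> real) \<Rightarrow> real \<Rightarrow> real" where
  "W_eps kT d E lam F nu eps =
     kT * ln (relmix (\<lambda>x. gibbs_resc kT d E lam x / (1 - eps)) (gibbs_resc kT d F nu))"

(* Therm B: thermalisation with column-stochastic B (B i j = prob of j \<rightarrow> i);
   Change S F': energies of the levels in S are set to F' *)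
datatype step = Therm "nat \<Rightarrow> nat \<Rightarrow> real" | Change "nat set" "nat \<Rightarrow> ereal"

fun apply_step :: "(nat \<Rightarrow> ereal) \<Rightarrow> step \<Rightarrow> (nat \<Rightarrow> ereal)" where
  "apply_step E (Therm B) = E"
| "apply_step E (Change S F') = (\<lambda>i. if i \<in> S then F' i else E i)"

definition energies_at :: "(nat \<Rightarrow> ereal) \<Rightarrow> step list \<Rightarrow> nat \<Rightarrow> (nat \<Rightarrow> ereal)" where
  "energies_at E ss k = foldl apply_step E (take k ss)"

definition final_energies :: "(nat \<Rightarrow> ereal) \<Rightarrow> step list \<Rightarrow> (nat \<Rightarrow> ereal)" where
  "final_energies E ss = foldl apply_step E ss"

fun valid_step :: "real \<Rightarrow> nat \<Rightarrow> (nat \<Rightarrow> ereal) \<Rightarrow> step \<Rightarrow> bool" where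
  "valid_step kT d E (Therm B) \<longleftrightarrow>
     (\<forall>i<d. \<forall>j<d. 0 \<le> B i j) \<and> (\<forall>j<d. (\<Sum>i<d. B i j) = 1) \<and>
     (\<forall>i<d. (\<Sum>j<d. B i j * gibbs_vec kT d E j) = gibbs_vec kT d E i)"
| "valid_step kT d E (Change S F') \<longleftrightarrow> S \<subseteq> {..<d} \<and> (\<forall>i\<in>S. F' i \<noteq> -\<infinity>)"

definition valid_strategy :: "real \<Rightarrow> nat \<Rightarrow> (nat \<Rightarrow> ereal) \<Rightarrow> step list \<Rightarrow> bool" where
  "valid_strategy kT d E ss \<longleftrightarrow>
     (\<forall>k<length ss. valid_step kT d (energies_at E ss k) (ss ! k))"

fun trans_prob :: "step \<Rightarrow> nat \<Rightarrow> nat \<Rightarrow> real" where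
  "trans_prob (Therm B) i j = B j i"
| "trans_prob (Change S F') i j = (if j = i then 1 else 0)"

fun step_work :: "(nat \<Rightarrow> ereal) \<Rightarrow> step \<Rightarrow> nat \<Rightarrow> ereal" where
  "step_work Eold (Therm B) i = 0"
| "step_work Eold (Change S F') i = (if i \<in> S then Eold i - F' i else 0)"

(* a realisation: the occupied levels at times 0, 1, ..., n *)
definition paths :: "nat \<Rightarrow> nat \<Rightarrow> nat list set" where
  "paths d n = {xs. length xs = Suc n \<and> set xs \<subseteq> {..<d}}"

definition path_prob :: "(nat \<Rightarrow> real) \<Rightarrow> step list \<Rightarrow> nat list \<Rightarrow> real" where
  "path_prob lam ss xs = lam (xs ! 0) * (\<Prod>k<length ss. trans_prob (ss ! k) (xs ! k) (xs ! Suc k))"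

definition path_work :: "(nat \<Rightarrow> ereal) \<Rightarrow> step list \<Rightarrow> nat list \<Rightarrow> ereal" where
  "path_work E ss xs =
     (if \<exists>k<length ss. step_work (energies_at E ss k) (ss ! k) (xs ! k) = -\<infinity> then -\<infinity>
      else (\<Sum>k<length ss. step_work (energies_at E ss k) (ss ! k) (xs ! k)))"

definition event_prob :: "nat \<Rightarrow> (nat \<Rightarrow> real) \<Rightarrow> step list \<Rightarrow> (nat list \<Rightarrow> bool) \<Rightarrow> real" where
  "event_prob d lam ss P = (\<Sum>xs\<in>{xs \<in> paths d (length ss). P xs}. path_prob lam ss xs)"

end

theory Submission
  imports Defs
begin


definition comb :: "ereal \<Rightarrow> ereal \<Rightarrow> ereal" where
  "comb w r = (if w = -\<infinity> \<or> r = -\<infinity> then -\<infinity> else w + r)"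

definition cp :: "step list \<Rightarrow> nat list \<Rightarrow> real" where
  "cp ss xs = (\<Prod>k<length ss. trans_prob (ss ! k) (xs ! k) (xs ! Suc k))"

fun Vr :: "nat \<Rightarrow> (nat \<Rightarrow> ereal) \<Rightarrow> step list \<Rightarrow> (ereal \<Rightarrow> bool) \<Rightarrow> (nat \<Rightarrow> real) \<Rightarrow> nat \<Rightarrow> real" where
  "Vr d E [] Q f x = (if Q 0 then f x else 0)"
| "Vr d E (s#ss) Q f x = (\<Sum>y<d. trans_prob s x y * Vr d (apply_step E s) ss (\<lambda>r. Q (comb (step_work E s x) r)) f y)"

lemma energies_at_Cons0: "energies_at E (s#ss) 0 = E"
  by (simp add: energies_at_def)

lemma energies_at_Cons: "energies_at E (s#ss) (Suc k) = energies_at (apply_step E s) ss k"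
  by (simp add: energies_at_def)

lemma final_energies_Cons: "final_energies E (s#ss) = final_energies (apply_step E s) ss"
  by (simp add: final_energies_def)

lemma valid_strategy_Cons:
  "valid_strategy kT d E (s#ss) \<longleftrightarrow> valid_step kT d E s \<and> valid_strategy kT d (apply_step E s) ss"
  unfolding valid_strategy_def
  by (auto simp: All_less_Suc2 energies_at_Cons0 energies_at_Cons)

lemma cp_Cons: "cp (s#ss) (x#xs) = trans_prob s x (xs!0) * cp ss xs"
  unfolding cp_def length_Cons prod.lessThan_Suc_shift by simp

lemma ereal_sum_not_minf:
  fixes g :: "nat \<Rightarrow> ereal"
  shows "(\<forall>k<n. g k \<noteq> -\<infinity>) \<Longrightarrow> (\<Sum>k<n. g k) \<noteq> -\<infinity>"
proof (induction n)
  case 0 then show ?case by simp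
next
  case (Suc n)
  then have a: "(\<Sum>k<n. g k) \<noteq> -\<infinity>" and b: "g n \<noteq> -\<infinity>" by auto
  then show ?case by (simp add: ereal_plus_eq_MInfty)
qed

lemma path_work_Cons:
  "path_work E (s#ss) (x#xs) = comb (step_work E s x) (path_work (apply_step E s) ss xs)"
proof -
  define g where "g k = step_work (energies_at E (s#ss) k) ((s#ss)!k) ((x#xs)!k)" for k
  define g' where "g' k = step_work (energies_at (apply_step E s) ss k) (ss!k) (xs!k)" for k
  have g0: "g 0 = step_work E s x" by (simp add: g_def energies_at_Cons0)
  have gS: "g (Suc k) = g' k" for k by (simp add: g_def g'_def energies_at_Cons)
  have pw: "path_work E (s#ss) (x#xs) = (if \<exists>k<Suc (length ss). g k = -\<infinity> then -\<infinity> else (\<Sum>k<Suc (length ss). g k))"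
    unfolding path_work_def g_def length_Cons by (rule refl)
  have pw': "path_work (apply_step E s) ss xs = (if \<exists>k<length ss. g' k = -\<infinity> then -\<infinity> else (\<Sum>k<length ss. g' k))"
    unfolding path_work_def g'_def by simp
  have ex: "(\<exists>k<Suc (length ss). g k = -\<infinity>) \<longleftrightarrow> g 0 = -\<infinity> \<or> (\<exists>k<length ss. g' k = -\<infinity>)"
    by (auto simp: Ex_less_Suc2 gS)
  have sm: "(\<Sum>k<Suc (length ss). g k) = g 0 + (\<Sum>k<length ss. g' k)"
    unfolding sum.lessThan_Suc_shift gS by simp
  show ?thesis
    using ereal_sum_not_minf[of "length ss" g'] unfolding pw pw' ex sm g0 comb_def
    by auto
qed

lemma finite_paths: "finite (paths d n)"
proof -
  have "paths d n \<subseteq> {xs. set xs \<subseteq> {..<d} \<and> length xs = Suc n}" by (auto simp: paths_def)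
  then show ?thesis using finite_lists_length_eq[of "{..<d}" "Suc n"] finite_subset by blast
qed

lemma paths_0: "paths d 0 = (\<lambda>x. [x]) ` {..<d}"
  by (auto simp: paths_def length_Suc_conv)

lemma paths_Suc: "paths d (Suc n) = (\<lambda>(x,xs). x#xs) ` ({..<d} \<times> paths d n)"
  by (auto simp: paths_def length_Suc_conv image_iff)

lemma PS:
  "(\<Sum>xs\<in>paths d (length ss). w (xs!0) * cp ss xs * (if Q (path_work E ss xs) then f (last xs) else 0))
   = (\<Sum>x<d. w x * Vr d E ss Q f x)"
proof (induction ss arbitrary: E Q w)
  case Nil
  have pw: "path_work E [] xs = 0" for xs by (simp add: path_work_def)
  show ?case unfolding list.size(3) paths_0 by (subst sum.reindex) (auto simp: inj_on_def cp_def pw intro!: sum.cong)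
next
  case (Cons s ss)
  have inj: "inj_on (\<lambda>(x,xs). x#xs) ({..<d} \<times> paths d (length ss))" by (auto simp: inj_on_def)
  have ne: "xs \<in> paths d (length ss) \<Longrightarrow> last (x#xs) = last xs" for x xs
    by (auto simp: paths_def)
  have nn: "[] \<notin> paths d n" for n by (simp add: paths_def)
  have "(\<Sum>xs\<in>paths d (length (s#ss)). w (xs!0) * cp (s#ss) xs * (if Q (path_work E (s#ss) xs) then f (last xs) else 0))
     = (\<Sum>x<d. \<Sum>xs\<in>paths d (length ss). w x * (trans_prob s x (xs!0) * cp ss xs) *
            (if Q (comb (step_work E s x) (path_work (apply_step E s) ss xs)) then f (last xs) else 0))"
    unfolding length_Cons paths_Suc
    by (subst sum.reindex[OF inj]) (auto simp: sum.cartesian_product cp_Cons path_work_Cons ne nn intro!: sum.cong)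
  also have "\<dots> = (\<Sum>x<d. w x * (\<Sum>xs\<in>paths d (length ss). trans_prob s x (xs!0) * cp ss xs *
            (if (\<lambda>r. Q (comb (step_work E s x) r)) (path_work (apply_step E s) ss xs) then f (last xs) else 0)))"
    by (simp add: sum_distrib_left mult.assoc)
  also have "\<dots> = (\<Sum>x<d. w x * Vr d E (s#ss) Q f x)"
  proof (rule sum.cong[OF refl])
    fix x
    show "w x * (\<Sum>xs\<in>paths d (length ss). trans_prob s x (xs!0) * cp ss xs *
            (if (\<lambda>r. Q (comb (step_work E s x) r)) (path_work (apply_step E s) ss xs) then f (last xs) else 0))
         = w x * Vr d E (s#ss) Q f x"
      using Cons.IH[of "trans_prob s x" "\<lambda>r. Q (comb (step_work E s x) r)" "apply_step E s"]
      by simp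
  qed
  finally show ?case .
qed

lemma bw_nonneg: "0 \<le> bw kT e" by (simp add: bw_def)

lemma trans_nonneg: "valid_step kT d E s \<Longrightarrow> x < d \<Longrightarrow> y < d \<Longrightarrow> 0 \<le> trans_prob s x y"
  by (cases s) auto

lemma trans_sum1: "valid_step kT d E s \<Longrightarrow> x < d \<Longrightarrow> (\<Sum>y<d. trans_prob s x y) = 1"
  by (cases s) auto

lemma Vr_nonneg:
  "valid_strategy kT d E ss \<Longrightarrow> (\<forall>i<d. 0 \<le> f i) \<Longrightarrow> x < d \<Longrightarrow> 0 \<le> Vr d E ss Q f x"
proof (induction ss arbitrary: E Q x)
  case Nil then show ?case by simp
next
  case (Cons s ss)
  then have v: "valid_step kT d E s" "valid_strategy kT d (apply_step E s) ss" by (auto simp: valid_strategy_Cons)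
  show ?case using Cons.IH[OF v(2) Cons.prems(2)] trans_nonneg[OF v(1) Cons.prems(3)]
    by (auto intro!: sum_nonneg)
qed

lemma Vr_le1:
  "valid_strategy kT d E ss \<Longrightarrow> (\<forall>i<d. 0 \<le> f i \<and> f i \<le> 1) \<Longrightarrow> x < d \<Longrightarrow> Vr d E ss Q f x \<le> 1"
proof (induction ss arbitrary: E Q x)
  case Nil then show ?case by simp
next
  case (Cons s ss)
  then have v: "valid_step kT d E s" "valid_strategy kT d (apply_step E s) ss" by (auto simp: valid_strategy_Cons)
  have "Vr d E (s#ss) Q f x \<le> (\<Sum>y<d. trans_prob s x y)"
    unfolding Vr.simps
    using Cons.IH[OF v(2) Cons.prems(2)] trans_nonneg[OF v(1) Cons.prems(3)]
    by (intro sum_mono) (simp add: mult_left_le)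
  then show ?case using trans_sum1[OF v(1) Cons.prems(3)] by simp
qed

lemma Vr_False: "Vr d E ss (\<lambda>r. False) f x = 0"
  by (induction ss arbitrary: E x) auto

lemma delta_mult: "(\<Sum>y<(d::nat). (if y = x then 1 else 0) * (g y::real)) = (if x < d then g x else 0)"
proof -
  have "(\<Sum>y<d. (if y = x then 1 else 0) * g y) = (\<Sum>y<d. if y = x then g y else 0)"
    by (rule sum.cong) auto
  also have "\<dots> = (if x < d then g x else 0)" by (subst sum.delta) auto
  finally show ?thesis .
qed

lemma comb0: "comb 0 r = r" by (cases r) (auto simp: comb_def)

lemma gibbs_pres:
  assumes v: "valid_step kT d E (Therm B)" and y: "y < d"
  shows "(\<Sum>x<d. B y x * bw kT (E x)) = bw kT (E y)"
proof -
  define Z where "Z = (\<Sum>j<d. bw kT (E j))"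
  have g: "(\<Sum>x<d. B y x * (bw kT (E x) / Z)) = bw kT (E y) / Z"
    using v y by (simp add: gibbs_vec_def Z_def)
  show ?thesis
  proof (cases "Z = 0")
    case True
    then have "\<forall>j\<in>{..<d}. bw kT (E j) = 0" unfolding Z_def
      using sum_nonneg_eq_0_iff[of "{..<d}" "\<lambda>j. bw kT (E j)"] bw_nonneg by auto
    then show ?thesis using y by simp
  next
    case False
    have "(\<Sum>x<d. B y x * (bw kT (E x) / Z)) = (\<Sum>x<d. B y x * bw kT (E x)) / Z"
      by (simp add: sum_divide_distrib)
    then show ?thesis using g False by (simp add: divide_cancel_right)
  qed
qed

lemma MAIN:
  assumes "kT > 0"
  shows "valid_strategy kT d E ss \<Longrightarrow> (\<forall>i<d. E i \<noteq> -\<infinity>) \<Longrightarrow> (\<forall>i<d. 0 \<le> f i) \<Longrightarrow>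
    (\<Sum>x<d. bw kT (E x) * exp (a x / kT) * Vr d E ss (\<lambda>r. ereal (a x) \<le> r) f x)
      \<le> (\<Sum>i<d. bw kT (final_energies E ss i) * f i)"
proof (induction ss arbitrary: E a)
  case Nil
  show ?case
  proof (rule sum_mono)
    fix x assume "x \<in> {..<d}"
    then have f: "0 \<le> f x" using Nil by auto
    show "bw kT (E x) * exp (a x / kT) * Vr d E [] (\<lambda>r. ereal (a x) \<le> r) f x \<le> bw kT (final_energies E [] x) * f x"
    proof (cases "a x \<le> 0")
      case True
      then have "exp (a x / kT) \<le> 1" using assms by (simp add: divide_nonpos_pos)
      then have "exp (a x / kT) * f x \<le> f x" using f by (simp add: mult_left_le_one_le)
      then show ?thesis using True bw_nonneg[of kT "E x"]
        by (simp add: final_energies_def mult.assoc mult_left_mono)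
    next
      case False
      then show ?thesis using f bw_nonneg[of kT "E x"] by (simp add: final_energies_def)
    qed
  qed
next
  case (Cons s ss)
  then have v: "valid_step kT d E s" "valid_strategy kT d (apply_step E s) ss" by (auto simp: valid_strategy_Cons)
  show ?case
  proof (cases s)
    case (Therm B)
    define V where "V y c = Vr d E ss (\<lambda>r. ereal c \<le> r) f y" for y c
    define g where "g y x = exp (a x / kT) * V y (a x)" for y x
    have ex: "\<exists>m. m < d \<and> (\<forall>x<d. g y x \<le> g y m)" if "y < d" for y
    proof -
      have ne: "g y ` {..<d} \<noteq> {}" using that by auto
      obtain m where m: "m < d" "g y m = Max (g y ` {..<d})" using Max_in[OF _ ne] by auto
      show ?thesis using m Max_ge by auto
    qed
    define m where "m y = (SOME m. m < d \<and> (\<forall>x<d. g y x \<le> g y m))" for y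
    have m: "m y < d \<and> (\<forall>x<d. g y x \<le> g y (m y))" if "y < d" for y
      unfolding m_def using someI_ex[OF ex[OF that]] .
    have apE: "apply_step E s = E" using Therm by simp
    have vE: "valid_strategy kT d E ss" using v(2) apE by simp
    have Vnn: "0 \<le> V y c" if "y < d" for y c unfolding V_def using Vr_nonneg[OF vE _ that] Cons.prems(3) by auto
    have Bnn: "0 \<le> B y x" if "y < d" "x < d" for x y using v(1) Therm that by auto
    have "(\<Sum>x<d. bw kT (E x) * exp (a x / kT) * Vr d E (s#ss) (\<lambda>r. ereal (a x) \<le> r) f x)
        = (\<Sum>x<d. bw kT (E x) * exp (a x / kT) * (\<Sum>y<d. B y x * V y (a x)))"
      by (simp add: Therm V_def comb0)
    also have "\<dots> = (\<Sum>x<d. \<Sum>y<d. B y x * bw kT (E x) * g y x)"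
      by (simp add: sum_distrib_left g_def mult_ac)
    also have "\<dots> = (\<Sum>y<d. \<Sum>x<d. B y x * bw kT (E x) * g y x)"
      by (rule sum.swap)
    also have "\<dots> \<le> (\<Sum>y<d. \<Sum>x<d. B y x * bw kT (E x) * g y (m y))"
    proof (intro sum_mono)
      fix y x assume y: "y \<in> {..<d}" and x: "x \<in> {..<d}"
      have "0 \<le> B y x * bw kT (E x)" using Bnn[of y x] bw_nonneg[of kT "E x"] x y by simp
      moreover have "g y x \<le> g y (m y)" using m[of y] x y by auto
      ultimately show "B y x * bw kT (E x) * g y x \<le> B y x * bw kT (E x) * g y (m y)"
        by (simp add: mult_left_mono)
    qed
    also have "\<dots> = (\<Sum>y<d. bw kT (E y) * g y (m y))"
    proof (rule sum.cong[OF refl])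
      fix y assume y: "y \<in> {..<d}"
      have "(\<Sum>x<d. B y x * bw kT (E x) * g y (m y)) = (\<Sum>x<d. B y x * bw kT (E x)) * g y (m y)"
        by (rule sum_distrib_right[symmetric])
      also have "\<dots> = bw kT (E y) * g y (m y)" using gibbs_pres[of kT d E B y] v(1) Therm y by simp
      finally show "(\<Sum>x<d. B y x * bw kT (E x) * g y (m y)) = bw kT (E y) * g y (m y)" .
    qed
    also have "\<dots> = (\<Sum>y<d. bw kT (E y) * exp (a (m y) / kT) * Vr d E ss (\<lambda>r. ereal (a (m y)) \<le> r) f y)"
      by (simp add: g_def V_def mult.assoc)
    also have "\<dots> \<le> (\<Sum>i<d. bw kT (final_energies E ss i) * f i)"
      using Cons.IH[OF vE Cons.prems(2) Cons.prems(3), of "\<lambda>y. a (m y)"] .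
    finally show ?thesis by (simp add: final_energies_Cons Therm)
  next
    case (Change S F')
    define E' where "E' = apply_step E s"
    have vE': "valid_strategy kT d E' ss" using v(2) E'_def by simp
    have E'nm: "\<forall>i<d. E' i \<noteq> -\<infinity>" using Cons.prems(2) v(1) Change by (auto simp: E'_def)
    define b where "b x = (if x \<in> S \<and> E x \<noteq> \<infinity> \<and> F' x \<noteq> \<infinity> then a x - (real_of_ereal (E x) - real_of_ereal (F' x)) else a x)" for x
    have tm: "bw kT (E x) * exp (a x / kT) * Vr d E (s#ss) (\<lambda>r. ereal (a x) \<le> r) f x
       \<le> bw kT (E' x) * exp (b x / kT) * Vr d E' ss (\<lambda>r. ereal (b x) \<le> r) f x" if x: "x < d" for x
    proof -
      have V1: "Vr d E (s#ss) (\<lambda>r. ereal (a x) \<le> r) f x = Vr d E' ss (\<lambda>r. ereal (a x) \<le> comb (step_work E s x) r) f x"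
        using x by (simp only: Change E'_def Vr.simps trans_prob.simps delta_mult) simp
      have RHSnn: "0 \<le> bw kT (E' x) * exp (b x / kT) * Vr d E' ss (\<lambda>r. ereal (b x) \<le> r) f x"
        using Vr_nonneg[OF vE' _ x] Cons.prems(3) bw_nonneg by auto
      show ?thesis
      proof (cases "E x = \<infinity>")
        case True then show ?thesis using RHSnn by (simp add: bw_def)
      next
        case Ef: False
        then obtain e where e: "E x = ereal e" using Cons.prems(2) x by (cases "E x") auto
        show ?thesis
        proof (cases "x \<in> S")
          case False
          then show ?thesis using V1 by (simp add: Change E'_def b_def comb0)
        next
          case xS: True
          show ?thesis
          proof (cases "F' x = \<infinity>")
            case True
            then have "(\<lambda>r. ereal (a x) \<le> comb (step_work E s x) r) = (\<lambda>r. False)"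
              using xS e by (auto simp: Change comb_def)
            then show ?thesis using V1 RHSnn by (simp add: Vr_False)
          next
            case False
            then obtain g where g: "F' x = ereal g" using v(1) Change xS by (cases "F' x") auto
            have q: "(\<lambda>r. ereal (a x) \<le> comb (step_work E s x) r) = (\<lambda>r. ereal (b x) \<le> r)"
            proof
              fix r show "(ereal (a x) \<le> comb (step_work E s x) r) = (ereal (b x) \<le> r)"
                using xS e g by (cases r) (auto simp: Change comb_def b_def)
            qed
            have bwq: "bw kT (E x) * exp (a x / kT) = bw kT (E' x) * exp (b x / kT)"
              using xS e g by (simp add: bw_def E'_def Change b_def exp_add[symmetric] diff_divide_distrib add_divide_distrib)
            show ?thesis using V1 q bwq by simp
          qed
        qed
      qed
    qed
    have "(\<Sum>x<d. bw kT (E x) * exp (a x / kT) * Vr d E (s#ss) (\<lambda>r. ereal (a x) \<le> r) f x)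
       \<le> (\<Sum>x<d. bw kT (E' x) * exp (b x / kT) * Vr d E' ss (\<lambda>r. ereal (b x) \<le> r) f x)"
      using tm by (intro sum_mono) auto
    also have "\<dots> \<le> (\<Sum>i<d. bw kT (final_energies E' ss i) * f i)"
      using Cons.IH[OF vE' E'nm Cons.prems(3)] .
    finally show ?thesis by (simp add: final_energies_Cons E'_def)
  qed
qed



definition cl :: "(nat \<Rightarrow> real) \<Rightarrow> nat \<Rightarrow> real \<Rightarrow> real" where
  "cl b k x = min (max (x - (\<Sum>m<k. b m)) 0) (b k)"

lemma psum_mono: "(\<And>k. k < n \<Longrightarrow> 0 \<le> b k) \<Longrightarrow> i \<le> j \<Longrightarrow> j \<le> n \<Longrightarrow> (\<Sum>m<i. b m) \<le> (\<Sum>m<(j::nat). (b m::real))"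
  by (rule sum_mono2) auto

lemma cl_sum:
  assumes "\<And>k. k < n \<Longrightarrow> 0 \<le> b k" "0 \<le> x"
  shows "m \<le> n \<Longrightarrow> (\<Sum>k<m. cl b k x) = min x (\<Sum>k<m. b k)"
proof (induction m)
  case 0 then show ?case using assms by simp
next
  case (Suc m)
  then have "0 \<le> b m" using assms by auto
  then show ?case using Suc by (auto simp: cl_def min_def max_def)
qed

lemma cl_bounds: "0 \<le> b k \<Longrightarrow> 0 \<le> cl b k x \<and> cl b k x \<le> b k"
  by (auto simp: cl_def)

lemma block_integral:
  fixes b h :: "nat \<Rightarrow> real"
  assumes b: "\<And>k. k < n \<Longrightarrow> 0 \<le> b k" and x: "0 \<le> x"
  shows "((\<lambda>y. \<Sum>k<n. if (\<Sum>m<k. b m) \<le> y \<and> y < (\<Sum>m<Suc k. b m) then h k else 0) has_integral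
          (\<Sum>k<n. h k * cl b k x)) {0..x}"
proof (rule has_integral_sum)
  fix k assume k: "k \<in> {..<n}"
  define s where "s = (\<Sum>m<k. b m)"
  have s0: "0 \<le> s" unfolding s_def using b k by (auto intro: sum_nonneg)
  have bk: "0 \<le> b k" using b k by auto
  have sS: "(\<Sum>m<Suc k. b m) = s + b k" by (simp add: s_def)
  define T where "T = {s .. min x (s + b k)}"
  have hT: "((\<lambda>y. h k) has_integral (h k * cl b k x)) T"
  proof (cases "s \<le> x")
    case True
    then have le: "s \<le> min x (s + b k)" using bk by simp
    have "min x (s + b k) - s = cl b k x" using True by (simp add: cl_def s_def min_def max_def)
    then show ?thesis using has_integral_const_real[of "h k" s "min x (s + b k)"] le
      unfolding T_def by (simp add: content_real mult.commute)
  next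
    case False
    then have "T = {}" unfolding T_def by auto
    then show ?thesis using False bk by (simp add: cl_def s_def)
  qed
  have "((\<lambda>y. h k) has_integral (h k * cl b k x)) ({s..<s + b k} \<inter> {0..x})"
  proof (rule iffD1[OF has_integral_spike_set_eq hT])
    show "negligible {y \<in> T - {s..<s + b k} \<inter> {0..x}. h k \<noteq> 0}"
      by (rule negligible_subset[of "{s + b k}"]) (use s0 in \<open>auto simp: T_def\<close>)
    show "negligible {y \<in> {s..<s + b k} \<inter> {0..x} - T. h k \<noteq> 0}"
      by (rule negligible_subset[of "{}"]) (auto simp: T_def)
  qed
  then have "((\<lambda>y. if y \<in> {s..<s + b k} then h k else 0) has_integral (h k * cl b k x)) {0..x}"
    by (subst has_integral_restrict_Int)
  then show "((\<lambda>y. if (\<Sum>m<k. b m) \<le> y \<and> y < (\<Sum>m<Suc k. b m) then h k else 0) has_integral (h k * cl b k x)) {0..x}"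
    unfolding sS by (simp add: s_def)
qed simp

lemma greedy:
  fixes b h u :: "nat \<Rightarrow> real"
  assumes b: "\<And>k. k < n \<Longrightarrow> 0 < b k"
    and h: "\<And>k. k < n \<Longrightarrow> 0 \<le> h k"
    and hmono: "\<And>i j. i \<le> j \<Longrightarrow> j < n \<Longrightarrow> h j \<le> h i"
    and u: "\<And>k. k < n \<Longrightarrow> 0 \<le> u k \<and> u k \<le> 1"
    and x: "0 \<le> x" and budget: "(\<Sum>k<n. u k * b k) \<le> x"
  shows "(\<Sum>k<n. u k * h k * b k) \<le> (\<Sum>k<n. h k * cl b k x)"
proof -
  define s where "s k = (\<Sum>m<k. b m)" for k
  have b0: "\<And>k. k < n \<Longrightarrow> 0 \<le> b k" using b less_imp_le by blast
  have smono: "s i \<le> s j" if "i \<le> j" "j \<le> n" for i j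
    unfolding s_def using psum_mono[of n b i j] b0 that by blast
  have sS: "s (Suc k) = s k + b k" for k by (simp add: s_def)
  have clk: "cl b k x = min (max (x - s k) 0) (b k)" for k by (simp add: cl_def s_def)
  have "(\<Sum>k<n. u k * h k * b k) - (\<Sum>k<n. h k * cl b k x) = (\<Sum>k<n. (u k * b k - cl b k x) * h k)"
    by (simp add: sum_subtractf algebra_simps)
  also have "\<dots> \<le> 0"
  proof (cases "s n \<le> x")
    case True
    have "(u k * b k - cl b k x) * h k \<le> 0" if k: "k < n" for k
    proof -
      have "s (Suc k) \<le> s n" using smono k by auto
      then have "b k \<le> x - s k" using True sS[of k] by linarith
      then have "cl b k x = b k" using b0[OF k] by (simp add: clk)
      then show ?thesis using u[OF k] b[OF k] h[OF k] by (simp add: mult_nonpos_nonneg mult_left_le_one_le)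
    qed
    then show ?thesis by (auto intro: sum_nonpos)
  next
    case False
    define K where "K = {k. k < n \<and> s k < x}"
    show ?thesis
    proof (cases "K = {}")
      case True
      then have "x \<le> s 0 \<or> n = 0" unfolding K_def by (cases n) auto
      then have x0: "x = 0 \<or> n = 0" using x by (auto simp: s_def)
      have ubnn: "\<forall>k\<in>{..<n}. 0 \<le> u k * b k" using u b0 by simp
      have ub: "\<forall>k\<in>{..<n}. u k * b k = 0"
      proof (cases "n = 0")
        case False
        then have "x = 0" using x0 by simp
        then have "(\<Sum>k<n. u k * b k) = 0" using budget sum_nonneg[of "{..<n}" "\<lambda>k. u k * b k"] ubnn by simp
        then show ?thesis using sum_nonneg_eq_0_iff[of "{..<n}" "\<lambda>k. u k * b k"] ubnn by simp
      qed simp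
      have "\<forall>k\<in>{..<n}. (u k * b k - cl b k x) * h k \<le> 0"
      proof
        fix k assume k: "k \<in> {..<n}"
        have "0 \<le> cl b k x" using cl_bounds[of b k x] b0 k by auto
        moreover have "0 \<le> h k" using h k by auto
        moreover have ub': "u k * b k = 0" using ub k by blast
        ultimately show "(u k * b k - cl b k x) * h k \<le> 0" unfolding ub' by (simp add: mult_nonneg_nonneg)
      qed
      then show ?thesis by (auto intro: sum_nonpos)
    next
      case Kne: False
      have fK: "finite K" by (simp add: K_def)
      define c where "c = Min (h ` K)"
      have c0: "0 \<le> c" unfolding c_def using Kne fK h by (auto simp: K_def)
      have cle: "c \<le> h k" if "k \<in> K" for k unfolding c_def using fK that by auto
      have "c \<in> h ` K" unfolding c_def using Min_in[of "h ` K"] fK Kne by simp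
      then obtain k0 where k0: "k0 \<in> K" "c = h k0" by blast
      have tm: "(u k * b k - cl b k x) * h k \<le> (u k * b k - cl b k x) * c" if k: "k < n" for k
      proof (cases "s k < x")
        case True
        then have kK: "k \<in> K" using k by (simp add: K_def)
        show ?thesis
        proof (cases "cl b k x = b k")
          case True
          have "(u k * b k - b k) \<le> 0" using u[OF k] b0[OF k] by (simp add: mult_left_le_one_le)
          then show ?thesis using True cle[OF kK] by (simp add: mult_left_mono_neg)
        next
          case False
          have "\<not> b k \<le> x - s k"
          proof
            assume "b k \<le> x - s k"
            then have "cl b k x = b k" using b0[OF k] by (simp add: clk)
            then show False using False by simp
          qed
          then have "x < s (Suc k)" using sS[of k] by linarith
          then have "k0 \<le> k"
          proof -
            have "s k0 < x" using k0 by (simp add: K_def)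
            show ?thesis
            proof (rule ccontr)
              assume "\<not> k0 \<le> k"
              then have "Suc k \<le> k0" by simp
              then have "s (Suc k) \<le> s k0" using smono k0 by (auto simp: K_def)
              then show False using \<open>s k0 < x\<close> \<open>x < s (Suc k)\<close> by simp
            qed
          qed
          then have "h k \<le> c" using hmono k k0 by auto
          then have "h k = c" using cle[OF kK] by simp
          then show ?thesis by simp
        qed
      next
        case False
        then have cl0: "cl b k x = 0" using b0[OF k] by (simp add: clk)
        have "k0 < k"
        proof (rule ccontr)
          assume "\<not> k0 < k"
          then have "s k \<le> s k0" using smono k0 by (auto simp: K_def)
          then show False using k0 False by (simp add: K_def)
        qed
        then have "h k \<le> c" using hmono k k0 by auto
        moreover have "0 \<le> u k * b k" using u[OF k] b0[OF k] by simp
        ultimately show ?thesis using cl0 by (simp add: mult_left_mono)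
      qed
      have "(\<Sum>k<n. (u k * b k - cl b k x) * h k) \<le> (\<Sum>k<n. (u k * b k - cl b k x) * c)"
        using tm by (intro sum_mono) auto
      also have "\<dots> = c * ((\<Sum>k<n. u k * b k) - (\<Sum>k<n. cl b k x))"
        by (simp add: sum_distrib_left sum_subtractf algebra_simps)
      also have "(\<Sum>k<n. cl b k x) = x"
        using cl_sum[OF b0 x, of n] False by (simp add: s_def)
      also have "c * ((\<Sum>k<n. u k * b k) - x) \<le> 0"
        using c0 budget by (simp add: mult_nonneg_nonpos)
      finally show ?thesis .
    qed
  qed
  finally show ?thesis by simp
qed

lemma cl_lip: "0 \<le> b k \<Longrightarrow> z \<le> y \<Longrightarrow> cl b k y - cl b k z \<le> y - z"
  by (auto simp: cl_def min_def max_def)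

lemma cl_mono: "z \<le> y \<Longrightarrow> cl b k z \<le> cl b k y"
  by (auto simp: cl_def min_def max_def)



lemma blk_order_prop:
  "distinct (blk_order kT d E lam) \<and> set (blk_order kT d E lam) = {i. i < d \<and> E i \<noteq> \<infinity>} \<and>
   sorted_wrt (\<lambda>i j. blk_height kT E lam j \<le> blk_height kT E lam i) (blk_order kT d E lam)"
proof -
  define xs where "xs = sort_key (\<lambda>i. - blk_height kT E lam i) (sorted_list_of_set {i. i < d \<and> E i \<noteq> \<infinity>})"
  have fin: "finite {i. i < d \<and> E i \<noteq> \<infinity>}" by simp
  have "sorted (map (\<lambda>i. - blk_height kT E lam i) xs)" unfolding xs_def by (rule sorted_sort_key)
  then have "sorted_wrt (\<lambda>i j. - blk_height kT E lam i \<le> - blk_height kT E lam j) xs"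
    by (simp add: sorted_wrt_map)
  then have s: "sorted_wrt (\<lambda>i j. blk_height kT E lam j \<le> blk_height kT E lam i) xs"
    by (rule sorted_wrt_mono_rel[rotated]) simp
  have "distinct xs \<and> set xs = {i. i < d \<and> E i \<noteq> \<infinity>} \<and>
        sorted_wrt (\<lambda>i j. blk_height kT E lam j \<le> blk_height kT E lam i) xs"
    using s fin unfolding xs_def by simp
  then show ?thesis unfolding blk_order_def by (rule someI)
qed

lemma conv_sum:
  fixes g :: "nat \<Rightarrow> real"
  assumes "distinct xs" "set xs \<subseteq> {..<d}" "\<And>i. i < d \<Longrightarrow> i \<notin> set xs \<Longrightarrow> g i = 0"
  shows "(\<Sum>i<d. g i) = (\<Sum>k<length xs. g (xs ! k))"
proof -
  have "(\<Sum>i<d. g i) = (\<Sum>i\<in>set xs. g i)"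
    using assms by (intro sum.mono_neutral_right) auto
  also have "\<dots> = sum_list (map g xs)" using assms(1) by (simp add: sum_list_distinct_conv_sum_set)
  also have "\<dots> = (\<Sum>k<length xs. g (xs ! k))"
    by (simp add: sum_list_sum_nth atLeast0LessThan)
  finally show ?thesis .
qed

locale gstate =
  fixes kT :: real and d :: nat and E :: "nat \<Rightarrow> ereal" and lam :: "nat \<Rightarrow> real"
  assumes kT: "kT > 0" and st: "is_state d E lam"
begin

abbreviation "\<pi> \<equiv> blk_order kT d E lam"
abbreviation "n \<equiv> length \<pi>"
definition "bb k = bw kT (E (\<pi> ! k))"
definition "hh k = blk_height kT E lam (\<pi> ! k)"

lemma dist: "distinct \<pi>" and setpi: "set \<pi> = {i. i < d \<and> E i \<noteq> \<infinity>}"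
  and srt: "sorted_wrt (\<lambda>i j. blk_height kT E lam j \<le> blk_height kT E lam i) \<pi>"
  using blk_order_prop by auto

lemma pik: "k < n \<Longrightarrow> \<pi> ! k < d \<and> E (\<pi> ! k) \<noteq> \<infinity>"
  using setpi nth_mem by blast

lemma Enm: "i < d \<Longrightarrow> E i \<noteq> -\<infinity>" using st by (auto simp: is_state_def)
lemma lamnn: "i < d \<Longrightarrow> 0 \<le> lam i" using st by (auto simp: is_state_def)
lemma laminf: "i < d \<Longrightarrow> E i = \<infinity> \<Longrightarrow> lam i = 0" using st by (auto simp: is_state_def)

lemma bb_pos: "k < n \<Longrightarrow> 0 < bb k"
  using pik by (simp add: bb_def bw_def)

lemma hh_nn: "k < n \<Longrightarrow> 0 \<le> hh k"
  using pik lamnn by (simp add: hh_def blk_height_def)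

lemma hh_mono: "i \<le> j \<Longrightarrow> j < n \<Longrightarrow> hh j \<le> hh i"
  using sorted_wrt_nth_less[OF srt, of i j] by (cases "i = j") (auto simp: hh_def)

lemma lam_hb: "k < n \<Longrightarrow> lam (\<pi> ! k) = hh k * bb k"
proof -
  assume k: "k < n"
  then obtain e where e: "E (\<pi> ! k) = ereal e" using pik Enm by (cases "E (\<pi> ! k)") auto
  have "exp (e / kT) * exp (- e / kT) = 1" by (simp add: exp_add[symmetric])
  then show ?thesis using e by (simp add: hh_def bb_def blk_height_def bw_def mult.assoc)
qed

lemma resc_eq: "gibbs_resc kT d E lam = (\<lambda>y. \<Sum>k<n. if (\<Sum>m<k. bb m) \<le> y \<and> y < (\<Sum>m<Suc k. bb m) then hh k else 0)"
  unfolding gibbs_resc_def blk_start_def bb_def hh_def by (rule refl)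

lemma resc_int: "0 \<le> x \<Longrightarrow> (gibbs_resc kT d E lam has_integral (\<Sum>k<n. hh k * cl bb k x)) {0..x}"
  unfolding resc_eq using block_integral[of n bb x hh] bb_pos less_imp_le by blast

lemma resc_integral: "0 \<le> x \<Longrightarrow> integral {0..x} (gibbs_resc kT d E lam) = (\<Sum>k<n. hh k * cl bb k x)"
  using resc_int integral_unique by blast

lemma lev_sum:
  fixes g :: "nat \<Rightarrow> real"
  assumes "\<And>i. i < d \<Longrightarrow> E i = \<infinity> \<Longrightarrow> g i = 0"
  shows "(\<Sum>i<d. g i) = (\<Sum>k<n. g (\<pi> ! k))"
  using conv_sum[OF dist, of d g] assms setpi by auto

lemma K1:
  assumes x: "0 \<le> x" and t: "\<And>i. i < d \<Longrightarrow> 0 \<le> t i \<and> t i \<le> 1"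
    and bud: "(\<Sum>i<d. t i * bw kT (E i)) \<le> x"
  shows "(\<Sum>i<d. t i * lam i) \<le> integral {0..x} (gibbs_resc kT d E lam)"
proof -
  have "(\<Sum>i<d. t i * lam i) = (\<Sum>k<n. t (\<pi> ! k) * lam (\<pi> ! k))"
    by (rule lev_sum) (simp add: laminf)
  also have "\<dots> = (\<Sum>k<n. t (\<pi> ! k) * hh k * bb k)" by (simp add: lam_hb mult.assoc)
  also have "\<dots> \<le> (\<Sum>k<n. hh k * cl bb k x)"
  proof (rule greedy[OF bb_pos hh_nn hh_mono _ x])
    show "0 \<le> t (\<pi> ! k) \<and> t (\<pi> ! k) \<le> 1" if "k < n" for k using t pik that by blast
    have "(\<Sum>i<d. t i * bw kT (E i)) = (\<Sum>k<n. t (\<pi> ! k) * bw kT (E (\<pi> ! k)))"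
      by (rule lev_sum) (simp add: bw_def)
    then show "(\<Sum>k<n. t (\<pi> ! k) * bb k) \<le> x" using bud by (simp add: bb_def)
  qed auto
  also have "\<dots> = integral {0..x} (gibbs_resc kT d E lam)" using resc_integral x by simp
  finally show ?thesis .
qed

lemma K2:
  assumes x: "0 \<le> x"
  shows "\<exists>t. (\<forall>i<d. 0 \<le> t i \<and> t i \<le> 1) \<and> (\<Sum>i<d. t i * bw kT (E i)) \<le> x \<and>
             integral {0..x} (gibbs_resc kT d E lam) = (\<Sum>i<d. t i * lam i)"
proof -
  define iv where "iv i = the_inv_into {..<n} ((!) \<pi>) i" for i
  define t where "t i = (if i \<in> set \<pi> then cl bb (iv i) x / bb (iv i) else 0)" for i
  have inj: "inj_on ((!) \<pi>) {..<n}" by (rule inj_on_nth[OF dist]) auto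
  have tk: "t (\<pi> ! k) = cl bb k x / bb k" if "k < n" for k
    using that the_inv_into_f_f[OF inj, of k] by (simp add: t_def iv_def)
  have clb: "0 \<le> cl bb k x \<and> cl bb k x \<le> bb k" if "k < n" for k
    using cl_bounds bb_pos[OF that] less_imp_le by blast
  have t01: "\<forall>i<d. 0 \<le> t i \<and> t i \<le> 1"
  proof (intro allI impI)
    fix i assume "i < d"
    show "0 \<le> t i \<and> t i \<le> 1"
    proof (cases "i \<in> set \<pi>")
      case True
      then obtain k where k: "k < n" "i = \<pi> ! k" by (auto simp: in_set_conv_nth)
      then show ?thesis using tk[OF k(1)] clb[OF k(1)] bb_pos[OF k(1)] by auto
    qed (simp add: t_def)
  qed
  have "(\<Sum>i<d. t i * bw kT (E i)) = (\<Sum>k<n. t (\<pi> ! k) * bw kT (E (\<pi> ! k)))"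
    by (rule lev_sum) (simp add: bw_def)
  also have "\<dots> = (\<Sum>k<n. cl bb k x)"
  proof (rule sum.cong[OF refl])
    fix k assume "k \<in> {..<n}"
    then have k: "k < n" by simp
    have "t (\<pi> ! k) * bw kT (E (\<pi> ! k)) = cl bb k x / bb k * bb k" by (simp add: tk[OF k] bb_def)
    also have "\<dots> = cl bb k x" using bb_pos[OF k] by simp
    finally show "t (\<pi> ! k) * bw kT (E (\<pi> ! k)) = cl bb k x" .
  qed
  also have "\<dots> = min x (\<Sum>k<n. bb k)"
    using cl_sum[of n bb x n] bb_pos less_imp_le x by blast
  also have "\<dots> \<le> x" by simp
  finally have bud: "(\<Sum>i<d. t i * bw kT (E i)) \<le> x" .
  have "(\<Sum>i<d. t i * lam i) = (\<Sum>k<n. t (\<pi> ! k) * lam (\<pi> ! k))"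
    by (rule lev_sum) (simp add: laminf)
  also have "\<dots> = (\<Sum>k<n. hh k * cl bb k x)"
  proof (rule sum.cong[OF refl])
    fix k assume "k \<in> {..<n}"
    then have k: "k < n" by simp
    have "t (\<pi> ! k) * lam (\<pi> ! k) = cl bb k x / bb k * (hh k * bb k)" by (simp add: tk[OF k] lam_hb[OF k])
    also have "\<dots> = hh k * cl bb k x" using bb_pos[OF k] by simp
    finally show "t (\<pi> ! k) * lam (\<pi> ! k) = hh k * cl bb k x" .
  qed
  also have "\<dots> = integral {0..x} (gibbs_resc kT d E lam)" using resc_integral x by simp
  finally show ?thesis using t01 bud by auto
qed

definition "CC = (\<Sum>k<n. hh k)"

lemma CC_nn: "0 \<le> CC" unfolding CC_def using hh_nn by (auto intro: sum_nonneg)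

lemma int_nn: "0 \<le> x \<Longrightarrow> 0 \<le> integral {0..x} (gibbs_resc kT d E lam)"
proof -
  assume x: "0 \<le> x"
  have "0 \<le> hh k * cl bb k x" if "k < n" for k
    using hh_nn[OF that] cl_bounds[of bb k x] bb_pos[OF that] by simp
  then show ?thesis using resc_integral[OF x] by (auto intro!: sum_nonneg)
qed

lemma int_lip:
  assumes "0 \<le> z" "z \<le> y"
  shows "integral {0..y} (gibbs_resc kT d E lam) - integral {0..z} (gibbs_resc kT d E lam) \<le> CC * (y - z)"
proof -
  have "integral {0..y} (gibbs_resc kT d E lam) - integral {0..z} (gibbs_resc kT d E lam)
      = (\<Sum>k<n. hh k * (cl bb k y - cl bb k z))"
    using resc_integral assms by (simp add: sum_subtractf right_diff_distrib)
  also have "\<dots> \<le> (\<Sum>k<n. hh k * (y - z))"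
  proof (rule sum_mono)
    fix k assume "k \<in> {..<n}"
    then have k: "k < n" by simp
    have "cl bb k y - cl bb k z \<le> y - z" using cl_lip[of bb k z y] bb_pos[OF k] assms by simp
    then show "hh k * (cl bb k y - cl bb k z) \<le> hh k * (y - z)" using hh_nn[OF k] by (rule mult_left_mono)
  qed
  also have "\<dots> = CC * (y - z)" by (simp add: CC_def sum_distrib_right)
  finally show ?thesis .
qed

lemma int_le: "0 \<le> x \<Longrightarrow> integral {0..x} (gibbs_resc kT d E lam) \<le> CC * x"
  using int_lip[of 0 x] by (simp add: integral_refl)

end



theorem theorem1:
  fixes kB T eps W :: real and d :: nat
    and E F :: "nat \<Rightarrow> ereal" and lam nu :: "nat \<Rightarrow> real" and ss :: "step list"
  assumes "kB > 0" and "T > 0"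
    and "is_state d E lam" and "is_state d F nu"
    and "0 \<le> eps" and "eps < 1"
    and "valid_strategy (kB * T) d E ss"
    and "\<forall>i<d. final_energies E ss i = F i"
    and "event_prob d lam ss (\<lambda>xs. ereal W \<le> path_work E ss xs) \<ge> 1 - eps"
    and "\<forall>i<d. event_prob d lam ss (\<lambda>xs. ereal W \<le> path_work E ss xs \<and> last xs = i)
                / event_prob d lam ss (\<lambda>xs. ereal W \<le> path_work E ss xs) = nu i"
  shows "W \<le> W_eps (kB * T) d E lam F nu eps"
proof -
  note a = assms
  define kT where "kT = kB * T"
  have kT: "kT > 0" using a(1,2) by (simp add: kT_def)
  interpret R: gstate kT d E lam using kT a(3) by unfold_locales
  interpret G: gstate kT d F nu using kT a(4) by unfold_locales
  have val: "valid_strategy kT d E ss" using a(7) by (simp add: kT_def)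
  have Enm: "\<forall>i<d. E i \<noteq> -\<infinity>" using R.Enm by blast
  define succ where "succ xs = (ereal W \<le> path_work E ss xs)" for xs
  have succf: "succ = (\<lambda>xs. ereal W \<le> path_work E ss xs)" by (simp add: fun_eq_iff succ_def)
  define PS where "PS = event_prob d lam ss succ"
  define q where "q i = event_prob d lam ss (\<lambda>xs. succ xs \<and> last xs = i)" for i
  have PSge: "1 - eps \<le> PS" using a(9) by (simp add: PS_def succf)
  have PSpos: "0 < PS" using PSge a(6) by simp
  have qnu: "q i = nu i * PS" if "i < d" for i
  proof -
    have "q i / PS = nu i" using a(10) that by (simp add: q_def PS_def succf)
    then show ?thesis using PSpos by (simp add: field_simps)
  qed
  define Q where "Q = (\<lambda>r. ereal W \<le> r)"
  have fp: "finite (paths d (length ss))" by (rule finite_paths)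
  have lastd: "last xs < d" if "xs \<in> paths d (length ss)" for xs
  proof -
    have "xs \<noteq> []" "set xs \<subseteq> {..<d}" using that by (auto simp: paths_def)
    then show ?thesis using last_in_set by blast
  qed
  have qsum: "(\<Sum>i<d. t i * q i) = (\<Sum>x<d. lam x * Vr d E ss Q t x)" for t
  proof -
    have "(\<Sum>i<d. t i * q i) = (\<Sum>i<d. \<Sum>xs\<in>paths d (length ss).
            (if succ xs \<and> last xs = i then t i * path_prob lam ss xs else 0))"
      unfolding q_def event_prob_def
      by (simp add: sum.inter_filter[OF fp] sum_distrib_left if_distrib cong: if_cong)
    also have "\<dots> = (\<Sum>xs\<in>paths d (length ss). \<Sum>i<d.
            (if succ xs \<and> last xs = i then t i * path_prob lam ss xs else 0))"
      by (rule sum.swap)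
    also have "\<dots> = (\<Sum>xs\<in>paths d (length ss). lam (xs!0) * cp ss xs * (if Q (path_work E ss xs) then t (last xs) else 0))"
    proof (rule sum.cong[OF refl])
      fix xs assume xs: "xs \<in> paths d (length ss)"
      show "(\<Sum>i<d. (if succ xs \<and> last xs = i then t i * path_prob lam ss xs else 0))
            = lam (xs!0) * cp ss xs * (if Q (path_work E ss xs) then t (last xs) else 0)"
      proof (cases "succ xs")
        case True
        have "(\<Sum>i<d. (if succ xs \<and> last xs = i then t i * path_prob lam ss xs else 0))
            = (\<Sum>i<d. (if last xs = i then t i * path_prob lam ss xs else 0))" using True by simp
        also have "\<dots> = t (last xs) * path_prob lam ss xs"
          using lastd[OF xs] by (subst sum.delta') auto
        finally show ?thesis using True by (simp add: Q_def succ_def path_prob_def cp_def)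
      next
        case False
        then show ?thesis by (simp add: Q_def succ_def)
      qed
    qed
    also have "\<dots> = (\<Sum>x<d. lam x * Vr d E ss Q t x)" by (rule PS)
    finally show ?thesis .
  qed
  define m0 where "m0 = exp (W / kT)"
  have m0pos: "0 < m0" by (simp add: m0_def)
  define f where "f = (\<lambda>x. gibbs_resc kT d E lam x / (1 - eps))"
  define g where "g = gibbs_resc kT d F nu"
  define Lr where "Lr l = integral {0..l} (gibbs_resc kT d E lam)" for l
  define Lg where "Lg l = integral {0..l} g" for l
  have intf: "integral {0..l} f = Lr l / (1 - eps)" if "0 \<le> l" for l
    unfolding f_def Lr_def using has_integral_divide[OF R.resc_int[OF that], of "1 - eps"]
      R.resc_integral[OF that] integral_unique by auto
  define P where "P = (\<lambda>m. m > 0 \<and> (\<forall>l\<ge>0. integral {0..l} f \<ge> integral {0..l * m} g))"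
  have Piff: "P m \<longleftrightarrow> m > 0 \<and> (\<forall>l\<ge>0. Lg (l * m) \<le> Lr l / (1 - eps))" for m
    unfolding P_def Lg_def using intf by auto
  have Pm0: "P m0"
  proof -
    have "Lg (l * m0) \<le> Lr l / (1 - eps)" if l: "0 \<le> l" for l
    proof -
      define x where "x = l * m0"
      have x: "0 \<le> x" using l m0pos by (simp add: x_def)
      obtain t where t: "\<forall>i<d. 0 \<le> t i \<and> t i \<le> 1" "(\<Sum>i<d. t i * bw kT (F i)) \<le> x"
          "integral {0..x} (gibbs_resc kT d F nu) = (\<Sum>i<d. t i * nu i)"
        using G.K2[OF x] by blast
      define tj where "tj j = Vr d E ss Q t j" for j
      have tj01: "0 \<le> tj j \<and> tj j \<le> 1" if "j < d" for j
        using Vr_nonneg[OF val _ that, of t Q] Vr_le1[OF val _ that, of t Q] t(1) by (auto simp: tj_def)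
      have "(\<Sum>j<d. tj j * lam j) = (\<Sum>i<d. t i * q i)" unfolding qsum tj_def
        by (rule sum.cong[OF refl]) (rule mult.commute)
      also have "\<dots> = PS * Lg x" using qnu by (simp add: Lg_def g_def t(3) sum_distrib_left mult_ac)
      finally have e1: "(\<Sum>j<d. tj j * lam j) = PS * Lg x" .
      have "(\<Sum>j<d. bw kT (E j) * exp (W / kT) * tj j) \<le> (\<Sum>i<d. bw kT (final_energies E ss i) * t i)"
        using MAIN[OF kT val Enm, of t "\<lambda>_. W"] t(1) by (simp add: tj_def Q_def)
      also have "\<dots> = (\<Sum>i<d. t i * bw kT (F i))" using a(8) by (simp add: mult.commute)
      also have "\<dots> \<le> l * m0" using t(2) by (simp add: x_def)
      finally have "m0 * (\<Sum>j<d. tj j * bw kT (E j)) \<le> m0 * l"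
        by (simp add: m0_def sum_distrib_left mult_ac)
      then have bud: "(\<Sum>j<d. tj j * bw kT (E j)) \<le> l" using m0pos by simp
      have "(\<Sum>j<d. tj j * lam j) \<le> Lr l" unfolding Lr_def by (rule R.K1[OF l tj01 bud])
      then have "PS * Lg x \<le> Lr l" using e1 by simp
      moreover have "0 \<le> Lg x" unfolding Lg_def g_def by (rule G.int_nn[OF x])
      ultimately have "(1 - eps) * Lg x \<le> Lr l" using PSge by (meson mult_right_mono order_trans)
      then show ?thesis using a(6) by (simp add: x_def field_simps)
    qed
    then show ?thesis using m0pos Piff by auto
  qed
  obtain i0 where i0: "i0 < d" "0 < nu i0"
  proof -
    have "(\<Sum>i<d. nu i) = 1" using a(4) by (simp add: is_state_def)
    then have "\<exists>i<d. nu i \<noteq> 0" by (metis (mono_tags, lifting) lessThan_iff sum.neutral zero_neq_one)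
    then show ?thesis using that G.lamnn by force
  qed
  define b0 where "b0 = bw kT (F i0)"
  have Fi0: "F i0 \<noteq> \<infinity>" using i0 G.laminf by force
  have b0pos: "0 < b0" using Fi0 by (simp add: b0_def bw_def)
  have Lgb0: "nu i0 \<le> Lg b0"
  proof -
    have "(\<Sum>i<d. (if i = i0 then 1 else 0) * nu i) \<le> Lg b0"
      unfolding Lg_def g_def
    proof (rule G.K1)
      show "0 \<le> b0" using b0pos by simp
      show "0 \<le> (if i = i0 then 1 else (0::real)) \<and> (if i = i0 then 1 else (0::real)) \<le> 1" for i by simp
      show "(\<Sum>i<d. (if i = i0 then 1 else 0) * bw kT (F i)) \<le> b0"
        unfolding delta_mult using i0 by (simp add: b0_def)
    qed
    then show ?thesis unfolding delta_mult using i0 by simp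
  qed
  define B where "B = R.CC * b0 / ((1 - eps) * nu i0)"
  have bnd: "m \<le> B" if "P m" for m
  proof -
    have m: "0 < m" using that Piff by auto
    define l where "l = b0 / m"
    have l: "0 \<le> l" using m b0pos by (simp add: l_def)
    have "Lg (l * m) \<le> Lr l / (1 - eps)" using that Piff l by auto
    then have "nu i0 \<le> Lr l / (1 - eps)" using Lgb0 m by (simp add: l_def)
    also have "\<dots> \<le> R.CC * l / (1 - eps)"
      using R.int_le[OF l] a(6) by (simp add: Lr_def divide_right_mono)
    finally have "nu i0 * (1 - eps) \<le> R.CC * l" using a(6) by (simp add: field_simps)
    then have "nu i0 * (1 - eps) * m \<le> R.CC * b0" using m by (simp add: l_def field_simps)
    then show ?thesis using m i0 a(6) by (simp add: B_def field_simps mult.commute)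
  qed
  define M where "M = Sup {m. P m}"
  have ne: "{m. P m} \<noteq> {}" using Pm0 by auto
  have bdd: "bdd_above {m. P m}" by (rule bdd_aboveI[of _ B]) (use bnd in blast)
  have m0M: "m0 \<le> M" unfolding M_def using Pm0 bdd by (auto intro: cSup_upper)
  have PM: "P M"
  proof -
    have "Lg (l * M) \<le> Lr l / (1 - eps)" if l: "0 \<le> l" for l
    proof (rule field_le_epsilon)
      fix e :: real assume e: "0 < e"
      define C where "C = G.CC * l"
      have C: "0 \<le> C" using G.CC_nn l by (simp add: C_def)
      define eta where "eta = e / (C + 1)"
      have eta: "0 < eta" using e C by (simp add: eta_def)
      have "M - eta < M" using eta by simp
      then obtain m where m: "P m" "M - eta < m" unfolding M_def using less_cSup_iff[OF ne bdd] by auto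
      have mM: "m \<le> M" unfolding M_def using m(1) bdd by (auto intro: cSup_upper)
      have mpos: "0 < m" using m(1) Piff by auto
      have "Lg (l * M) - Lg (l * m) \<le> G.CC * (l * M - l * m)"
        unfolding Lg_def g_def by (rule G.int_lip) (use l mpos mM in \<open>auto intro: mult_left_mono\<close>)
      also have "\<dots> = C * (M - m)" by (simp add: C_def algebra_simps)
      also have "\<dots> \<le> C * eta" using m(2) C by (intro mult_left_mono) auto
      also have "\<dots> \<le> e"
      proof -
        have "C * eta = e * (C / (C + 1))" by (simp add: eta_def)
        also have "\<dots> \<le> e * 1" using C e by (intro mult_left_mono) auto
        finally show ?thesis by simp
      qed
      finally have "Lg (l * M) \<le> Lg (l * m) + e" by simp
      moreover have "Lg (l * m) \<le> Lr l / (1 - eps)" using m(1) Piff l by auto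
      ultimately show "Lg (l * M) \<le> Lr l / (1 - eps) + e" by simp
    qed
    moreover have "0 < M" using m0M m0pos by simp
    ultimately show ?thesis using Piff by auto
  qed
  have rel: "relmix f g = M"
    unfolding relmix_def P_def[symmetric]
  proof (rule Greatest_equality)
    show "P M" by (rule PM)
    show "y \<le> M" if "P y" for y unfolding M_def using that bdd by (auto intro: cSup_upper)
  qed
  have "W = kT * ln m0" using kT by (simp add: m0_def)
  also have "\<dots> \<le> kT * ln M" using m0M m0pos kT by simp
  also have "\<dots> = W_eps kT d E lam F nu eps" by (simp add: W_eps_def rel[unfolded f_def g_def])
  finally show ?thesis by (simp add: kT_def)
qed


end
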